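(* Consider a passive, minimal interconnected system $\Sigma_c=(A_c,B_c,C_c,D_c)$ consisting of $k$ passive, minimal subsystems $\Sigma_1,\dots,\Sigma_k$, a positive semi-definite interconnection matrix $S$ and an external input matrix $\mathcal{B}$. If $\Sigma_c$ is reduced to $\hat{\Sigma}_c$ using the Passive Interconnected Balanced Truncation (PIBT) algorithm described in the context, then the reduced subsystems $\hat{\Sigma}_j$, $j\in\{1,\dots,k\}$, and the reduced interconnected system $\hat{\Sigma}_c$ are passive.
   Context: A square, minimal system $\Sigma=(A,B,C,D)$, $\dot x=Ax+Bu$, $y=Cx+Du$, is passive iff there is $\Xi=\Xi^\top\succ0$ with $\begin{bmatrix}A^\top\Xi+\Xi A & \Xi B-C^\top\\ B^\top\Xi-C & -(D+D^\top)\end{bmatrix}\preceq0$ (positive real lemma). Subsystems $\Sigma_j=(A_j,B_j,C_j,D_j)$ with states $x_j\in\mathbb{R}^{n_j}$, inputs $v_j$ and outputs $z_j$ in $\mathbb{R}^{p_j}$ are passive and minimal. Their parallel composition is $\Sigma_b=(A_b,B_b,C_b,D_b)$ with $A_b=\mathrm{diag}(A_1,\dots,A_k)$ etc. and stacked states/inputs/outputs $x_b,v_b,z_b$. The interconnection is $v_b=-Sz_b+\mathcal{B}u_c$, $y_c=\mathcal{B}^\top z_b$ with $S\succeq0$ such that $I+SD_b$, $I+D_bS$ are nonsingular, giving $A_c=A_b-B_b\mathcal{D}_2SC_b$, $B_c=B_b\mathcal{D}_2\mathcal{B}$, $C_c=\mathcal{B}^\top\mathcal{D}_1C_b$, $D_c=\mathcal{B}^\top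 D_b\mathcal{D}_2\mathcal{B}$, $\mathcal{D}_1=(I+D_bS)^{-1}$, $\mathcal{D}_2=(I+SD_b)^{-1}$; $\Sigma_c$ is assumed asymptotically stable. It was shown earlier that such a negative feedback interconnection of a passive $\Sigma_b$ with $S\succeq0$ and $\mathcal{B}$ is passive. PIBT: (1) compute the controllability Gramian $P_c$ of $\Sigma_c$ from $0=A_cP_c+P_cA_c^\top+B_cB_c^\top$ and partition it into blocks $P_{i,j}\in\mathbb{R}^{n_i\times n_j}$ according to the subsystem states; (2) for each $j$ compute the (minimal) available storage $\Xi_j$ solving the positive real LMI above for $(A_j,B_j,C_j,D_j)$; (3) balance $\Sigma_j$ with input Gramian $X_i=P_{j,j}$ and output Gramian $X_o=\Xi_j$: Cholesky factors $X_i=R_i^\top R_i$, $X_o=R_o^\top R_o$, SVD $R_oR_i^\top=U\Gamma V$, $T=\Gamma^{-1/2}U^\top R_o$, $T^{-1}=R_i^\top V\Gamma^{-1/2}$, balanced realization $(TA_jT^{-1},TB_j,C_jT^{-1},D_j)$, for which the transformed Gramians both equal the diagonal sorted $\Gamma$; (4) partition the balanced realization as $\begin{bmatrix}\tilde A_{11}&\tilde A_{12}\\ \tilde A_{21}&\tilde A_{22}\end{bmatrix}$, $\begin{bmatrix}\tilde B_1\\ \tilde B_2\end{bmatrix}$, $[\tilde C_1\ \tilde C_2]$, with the first block corresponding to the largest diagonal entries of $\Gamma$, and keep $\hat{\Sigma}_j=(\tilde A_{11},\tilde B_1,\tilde C_1,D_j)$; (5) interconnect the $\hat{\Sigma}_j$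 with $S$ and $\mathcal{B}$ via the same formulas to obtain $\hat{\Sigma}_c$. *)

theory Defs
  imports "Jordan_Normal_Form.Matrix" "Jordan_Normal_Form.Char_Poly"
begin

text \<open>A (square) LTI system x' = A x + B u, y = C x + D u is represented by the
  tuple (A, B, C, D) of real matrices.\<close>

type_synonym sys = "real mat \<times> real mat \<times> real mat \<times> real mat"

definition sys_A :: "sys \<Rightarrow> real mat" where "sys_A \<Sigma> = (case \<Sigma> of (A,B,C,D) \<Rightarrow> A)"
definition sys_B :: "sys \<Rightarrow> real mat" where "sys_B \<Sigma> = (case \<Sigma> of (A,B,C,D) \<Rightarrow> B)"
definition sys_C :: "sys \<Rightarrow> real mat" where "sys_C \<Sigma> = (case \<Sigma> of (A,B,C,D) \<Rightarrow> C)"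
definition sys_D :: "sys \<Rightarrow> real mat" where "sys_D \<Sigma> = (case \<Sigma> of (A,B,C,D) \<Rightarrow> D)"

definition sdim :: "sys \<Rightarrow> nat" where "sdim \<Sigma> = dim_row (sys_A \<Sigma>)"
definition iodim :: "sys \<Rightarrow> nat" where "iodim \<Sigma> = dim_col (sys_B \<Sigma>)"

definition sys_wf :: "sys \<Rightarrow> nat \<Rightarrow> nat \<Rightarrow> bool" where
  "sys_wf \<Sigma> n p \<longleftrightarrow> sys_A \<Sigma> \<in> carrier_mat n n \<and> sys_B \<Sigma> \<in> carrier_mat n p
     \<and> sys_C \<Sigma> \<in> carrier_mat p n \<and> sys_D \<Sigma> \<in> carrier_mat p p"

definition psd_mat :: "nat \<Rightarrow> real mat \<Rightarrow> bool" where
  "psd_mat n M \<longleftrightarrow> M \<in> carrier_mat n n \<and> transpose_mat M = M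
     \<and> (\<forall>v \<in> carrier_vec n. 0 \<le> v \<bullet> (M *\<^sub>v v))"

definition pd_mat :: "nat \<Rightarrow> real mat \<Rightarrow> bool" where
  "pd_mat n M \<longleftrightarrow> M \<in> carrier_mat n n \<and> transpose_mat M = M
     \<and> (\<forall>v \<in> carrier_vec n. v \<noteq> 0\<^sub>v n \<longrightarrow> 0 < v \<bullet> (M *\<^sub>v v))"

definition pr_lmi_mat :: "sys \<Rightarrow> real mat \<Rightarrow> real mat" where
  "pr_lmi_mat \<Sigma> X = (case \<Sigma> of (A,B,C,D) \<Rightarrow>
     four_block_mat (transpose_mat A * X + X * A) (X * B - transpose_mat C)
                    (transpose_mat B * X - C) (- (D + transpose_mat D)))"

definition pr_lmi :: "sys \<Rightarrow> nat \<Rightarrow> nat \<Rightarrow> real mat \<Rightarrow> bool" where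
  "pr_lmi \<Sigma> n p X \<longleftrightarrow> psd_mat (n + p) (- pr_lmi_mat \<Sigma> X)"

text \<open>Passivity, via the positive real lemma: a square system admitting X = X^T > 0
  satisfying the positive real LMI.\<close>
definition is_passive :: "sys \<Rightarrow> bool" where
  "is_passive \<Sigma> \<longleftrightarrow> (\<exists>n p. sys_wf \<Sigma> n p \<and> (\<exists>X. pd_mat n X \<and> pr_lmi \<Sigma> n p X))"

text \<open>Kalman controllability: the controllability matrix [B, AB, ..., A^(n-1) B]
  has full row rank n, i.e. its rows are linearly independent.\<close>
definition controllable :: "nat \<Rightarrow> real mat \<Rightarrow> real mat \<Rightarrow> bool" where
  "controllable n A B \<longleftrightarrow> (\<forall>v \<in> carrier_vec n.
      (\<forall>i<n. transpose_mat ((A ^\<^sub>m i) * B) *\<^sub>v v = 0\<^sub>v (dim_col B)) \<longrightarrow> v = 0\<^sub>v n)"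

definition observable :: "nat \<Rightarrow> real mat \<Rightarrow> real mat \<Rightarrow> bool" where
  "observable n A C \<longleftrightarrow> controllable n (transpose_mat A) (transpose_mat C)"

definition is_minimal :: "sys \<Rightarrow> bool" where
  "is_minimal \<Sigma> \<longleftrightarrow> (\<exists>n p. sys_wf \<Sigma> n p \<and> controllable n (sys_A \<Sigma>) (sys_B \<Sigma>)
                        \<and> observable n (sys_A \<Sigma>) (sys_C \<Sigma>))"

definition asymp_stable :: "sys \<Rightarrow> bool" where
  "asymp_stable \<Sigma> \<longleftrightarrow> (\<forall>z::complex.
      poly (map_poly complex_of_real (char_poly (sys_A \<Sigma>))) z = 0 \<longrightarrow> Re z < 0)"

definition inv_mat :: "nat \<Rightarrow> real mat \<Rightarrow> real mat" where
  "inv_mat n M = (SOME N. N \<in> carrier_mat n n \<and> M * N = 1\<^sub>m n \<and> N * M = 1\<^sub>m n)"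

definition parallel :: "sys list \<Rightarrow> sys" where
  "parallel \<Sigma>s = (diag_block_mat (map sys_A \<Sigma>s), diag_block_mat (map sys_B \<Sigma>s),
                   diag_block_mat (map sys_C \<Sigma>s), diag_block_mat (map sys_D \<Sigma>s))"

text \<open>Interconnection v_b = -S z_b + Bcal u_c, y_c = Bcal^T z_b.\<close>
definition interconnect :: "sys \<Rightarrow> real mat \<Rightarrow> real mat \<Rightarrow> sys" where
  "interconnect \<Sigma>b S Bc = (case \<Sigma>b of (Ab, Bb, Cb, Db) \<Rightarrow>
     (let q = dim_row Db;
          D1 = inv_mat q (1\<^sub>m q + Db * S);
          D2 = inv_mat q (1\<^sub>m q + S * Db)
      in (Ab - Bb * D2 * S * Cb, Bb * D2 * Bc,
          transpose_mat Bc * D1 * Cb, transpose_mat Bc * Db * D2 * Bc)))"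

definition state_offset :: "sys list \<Rightarrow> nat \<Rightarrow> nat" where
  "state_offset \<Sigma>s j = sum_list (map sdim (take j \<Sigma>s))"

definition diag_sub_block :: "real mat \<Rightarrow> nat \<Rightarrow> nat \<Rightarrow> real mat" where
  "diag_sub_block P off n = mat n n (\<lambda>(a,b). P $$ (off + a, off + b))"

definition ctrb_gramian :: "sys \<Rightarrow> real mat \<Rightarrow> bool" where
  "ctrb_gramian \<Sigma> P \<longleftrightarrow> P \<in> carrier_mat (sdim \<Sigma>) (sdim \<Sigma>) \<and>
     sys_A \<Sigma> * P + P * transpose_mat (sys_A \<Sigma>) + sys_B \<Sigma> * transpose_mat (sys_B \<Sigma>)
       = 0\<^sub>m (sdim \<Sigma>) (sdim \<Sigma>)"

definition available_storage :: "sys \<Rightarrow> real mat \<Rightarrow> bool" where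
  "available_storage \<Sigma> X \<longleftrightarrow> pd_mat (sdim \<Sigma>) X \<and> pr_lmi \<Sigma> (sdim \<Sigma>) (iodim \<Sigma>) X \<and>
     (\<forall>Y. pd_mat (sdim \<Sigma>) Y \<and> pr_lmi \<Sigma> (sdim \<Sigma>) (iodim \<Sigma>) Y \<longrightarrow> psd_mat (sdim \<Sigma>) (Y - X))"

definition cholesky_factor :: "nat \<Rightarrow> real mat \<Rightarrow> real mat \<Rightarrow> bool" where
  "cholesky_factor n X R \<longleftrightarrow> R \<in> carrier_mat n n \<and> upper_triangular R \<and>
     (\<forall>i<n. 0 < R $$ (i,i)) \<and> transpose_mat R * R = X"

definition orthonormal_mat :: "nat \<Rightarrow> real mat \<Rightarrow> bool" where
  "orthonormal_mat n U \<longleftrightarrow> U \<in> carrier_mat n n \<and> transpose_mat U * U = 1\<^sub>m n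
     \<and> U * transpose_mat U = 1\<^sub>m n"

definition sorted_pos_diag :: "nat \<Rightarrow> real mat \<Rightarrow> bool" where
  "sorted_pos_diag n G \<longleftrightarrow> G \<in> carrier_mat n n \<and> diagonal_mat G \<and>
     (\<forall>i<n. 0 < G $$ (i,i)) \<and> (\<forall>i j. i \<le> j \<and> j < n \<longrightarrow> G $$ (j,j) \<le> G $$ (i,i))"

definition diag_inv_sqrt :: "nat \<Rightarrow> real mat \<Rightarrow> real mat" where
  "diag_inv_sqrt n G = mat_diag n (\<lambda>i. 1 / sqrt (G $$ (i,i)))"

definition balancing_transform :: "nat \<Rightarrow> real mat \<Rightarrow> real mat \<Rightarrow> real mat \<Rightarrow> real mat \<Rightarrow> bool" where
  "balancing_transform n Xi Xo T Tinv \<longleftrightarrow> (\<exists>Ri Ro U G V.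
     cholesky_factor n Xi Ri \<and> cholesky_factor n Xo Ro \<and>
     orthonormal_mat n U \<and> orthonormal_mat n V \<and> sorted_pos_diag n G \<and>
     Ro * transpose_mat Ri = U * G * transpose_mat V \<and>
     T = diag_inv_sqrt n G * transpose_mat U * Ro \<and>
     Tinv = transpose_mat Ri * V * diag_inv_sqrt n G)"

definition truncate_balanced :: "nat \<Rightarrow> sys \<Rightarrow> real mat \<Rightarrow> real mat \<Rightarrow> sys" where
  "truncate_balanced r \<Sigma> T Tinv = (case \<Sigma> of (A,B,C,D) \<Rightarrow>
     (let At = T * A * Tinv; Bt = T * B; Ct = C * Tinv; p = dim_col B
      in (mat r r (\<lambda>(i,j). At $$ (i,j)), mat r p (\<lambda>(i,j). Bt $$ (i,j)),
          mat p r (\<lambda>(i,j). Ct $$ (i,j)), D)))"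

definition PIBT :: "sys list \<Rightarrow> real mat \<Rightarrow> real mat \<Rightarrow> nat list \<Rightarrow> sys list \<Rightarrow> sys \<Rightarrow> bool" where
  "PIBT \<Sigma>s S Bc rs \<Sigma>hs \<Sigma>hc \<longleftrightarrow>
     length rs = length \<Sigma>s \<and> length \<Sigma>hs = length \<Sigma>s \<and>
     (\<exists>Pc. ctrb_gramian (interconnect (parallel \<Sigma>s) S Bc) Pc \<and>
        (\<forall>j < length \<Sigma>s. \<exists>X T Tinv.
           available_storage (\<Sigma>s ! j) X \<and>
           balancing_transform (sdim (\<Sigma>s ! j))
             (diag_sub_block Pc (state_offset \<Sigma>s j) (sdim (\<Sigma>s ! j))) X T Tinv \<and>
           \<Sigma>hs ! j = truncate_balanced (rs ! j) (\<Sigma>s ! j) T Tinv)) \<and>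
     \<Sigma>hc = interconnect (parallel \<Sigma>hs) S Bc"

end

theory Submission
  imports Defs
begin

definition Qf :: "sys \<Rightarrow> real mat \<Rightarrow> real vec \<Rightarrow> real vec \<Rightarrow> real" where
  "Qf \<Sigma> X x v = x \<bullet> (X *\<^sub>v (sys_A \<Sigma> *\<^sub>v x + sys_B \<Sigma> *\<^sub>v v))
      - v \<bullet> (sys_C \<Sigma> *\<^sub>v x + sys_D \<Sigma> *\<^sub>v v)"

lemma tr_dot:
  fixes M :: "real mat"
  assumes "M \<in> carrier_mat nr nc" "x \<in> carrier_vec nc" "y \<in> carrier_vec nr"
  shows "x \<bullet> (transpose_mat M *\<^sub>v y) = (M *\<^sub>v x) \<bullet> y"
proof -
  have "x \<bullet> (transpose_mat M *\<^sub>v y) = (transpose_mat M *\<^sub>v y) \<bullet> x"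
    by (rule comm_scalar_prod[of _ nc], insert assms, auto)
  also have "\<dots> = y \<bullet> (M *\<^sub>v x)" by (rule transpose_vec_mult_scalar[OF assms(1,2,3)])
  also have "\<dots> = (M *\<^sub>v x) \<bullet> y" by (rule comm_scalar_prod[of _ nr], insert assms, auto)
  finally show ?thesis .
qed

lemma sym_form:
  fixes X :: "real mat"
  assumes "X \<in> carrier_mat n n" "transpose_mat X = X" "x \<in> carrier_vec n" "y \<in> carrier_vec n"
  shows "x \<bullet> (X *\<^sub>v y) = y \<bullet> (X *\<^sub>v x)"
proof -
  have "x \<bullet> (X *\<^sub>v y) = x \<bullet> (transpose_mat X *\<^sub>v y)" using assms by simp
  also have "\<dots> = (X *\<^sub>v x) \<bullet> y" by (rule tr_dot[OF assms(1,3,4)])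
  also have "\<dots> = y \<bullet> (X *\<^sub>v x)" by (rule comm_scalar_prod[of _ n], insert assms, auto)
  finally show ?thesis .
qed

lemma lmi_form:
  fixes A B C D X :: "real mat"
  assumes wf: "sys_wf (A,B,C,D) n p" and X: "X \<in> carrier_mat n n" "transpose_mat X = X"
    and x: "x \<in> carrier_vec n" and v: "v \<in> carrier_vec p"
  shows "(x @\<^sub>v v) \<bullet> (pr_lmi_mat (A,B,C,D) X *\<^sub>v (x @\<^sub>v v)) = 2 * Qf (A,B,C,D) X x v"
proof -
  from wf have A: "A \<in> carrier_mat n n" and B: "B \<in> carrier_mat n p" and C: "C \<in> carrier_mat p n"
    and D: "D \<in> carrier_mat p p" unfolding sys_wf_def sys_A_def sys_B_def sys_C_def sys_D_def by auto
  have c1: "transpose_mat A * X + X * A \<in> carrier_mat n n" using A X by auto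
  have c2: "X * B - transpose_mat C \<in> carrier_mat n p" using B C X by auto
  have c3: "transpose_mat B * X - C \<in> carrier_mat p n" using B C X by auto
  have c4: "- (D + transpose_mat D) \<in> carrier_mat p p" using D by auto
  have "pr_lmi_mat (A,B,C,D) X *\<^sub>v (x @\<^sub>v v) =
     ((transpose_mat A * X + X * A) *\<^sub>v x + (X * B - transpose_mat C) *\<^sub>v v) @\<^sub>v
     ((transpose_mat B * X - C) *\<^sub>v x + (- (D + transpose_mat D)) *\<^sub>v v)"
    unfolding pr_lmi_mat_def by (simp, rule four_block_mat_mult_vec[OF c1 c2 c3 c4 x v])
  hence "(x @\<^sub>v v) \<bullet> (pr_lmi_mat (A,B,C,D) X *\<^sub>v (x @\<^sub>v v)) =
     x \<bullet> ((transpose_mat A * X + X * A) *\<^sub>v x + (X * B - transpose_mat C) *\<^sub>v v) +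
     v \<bullet> ((transpose_mat B * X - C) *\<^sub>v x + (- (D + transpose_mat D)) *\<^sub>v v)"
    using scalar_prod_append[of x n v p] c1 c2 c3 c4 x v by auto
  also have "x \<bullet> ((transpose_mat A * X + X * A) *\<^sub>v x + (X * B - transpose_mat C) *\<^sub>v v)
     = x \<bullet> (transpose_mat A *\<^sub>v (X *\<^sub>v x)) + x \<bullet> (X *\<^sub>v (A *\<^sub>v x)) + x \<bullet> (X *\<^sub>v (B *\<^sub>v v))
       - x \<bullet> (transpose_mat C *\<^sub>v v)"
    using A B C X x v
    by (simp add: add_mult_distrib_mat_vec[of _ n n] minus_mult_distrib_mat_vec[of _ n p]
          scalar_prod_add_distrib[of _ n] scalar_prod_minus_distrib[of _ n])
  also have "x \<bullet> (transpose_mat A *\<^sub>v (X *\<^sub>v x)) = x \<bullet> (X *\<^sub>v (A *\<^sub>v x))"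
    using tr_dot[OF A x, of "X *\<^sub>v x"] sym_form[OF X x, of "A *\<^sub>v x"] X x A
       comm_scalar_prod[of "A *\<^sub>v x" n "X *\<^sub>v x"] by auto
  also have "x \<bullet> (transpose_mat C *\<^sub>v v) = v \<bullet> (C *\<^sub>v x)"
    using tr_dot[OF C x v] comm_scalar_prod[of "C *\<^sub>v x" p v] C x v by auto
  also have "v \<bullet> ((transpose_mat B * X - C) *\<^sub>v x + (- (D + transpose_mat D)) *\<^sub>v v)
      = v \<bullet> (transpose_mat B *\<^sub>v (X *\<^sub>v x)) - v \<bullet> (C *\<^sub>v x) - v \<bullet> (D *\<^sub>v v) - v \<bullet> (transpose_mat D *\<^sub>v v)"
    using B C D X x v
    by (simp add: add_mult_distrib_mat_vec[of _ p p] minus_mult_distrib_mat_vec[of _ p n]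
          scalar_prod_add_distrib[of _ p] scalar_prod_minus_distrib[of _ p])
  also have "v \<bullet> (transpose_mat B *\<^sub>v (X *\<^sub>v x)) = x \<bullet> (X *\<^sub>v (B *\<^sub>v v))"
    using tr_dot[OF B v, of "X *\<^sub>v x"] sym_form[OF X x, of "B *\<^sub>v v"] X x B v
       comm_scalar_prod[of "B *\<^sub>v v" n "X *\<^sub>v x"] by auto
  also have "v \<bullet> (transpose_mat D *\<^sub>v v) = v \<bullet> (D *\<^sub>v v)"
    using tr_dot[OF D v v] comm_scalar_prod[of "D *\<^sub>v v" p v] D v by auto
  finally show ?thesis unfolding Qf_def sys_A_def sys_B_def sys_C_def sys_D_def
    using A B C D X x v
    by (simp add: mult_add_distrib_mat_vec[of _ n] scalar_prod_add_distrib[of _ n]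
          scalar_prod_add_distrib[of _ p])
qed

lemma wf_carr:
  assumes "sys_wf \<Sigma> n p"
  shows "sys_A \<Sigma> \<in> carrier_mat n n" "sys_B \<Sigma> \<in> carrier_mat n p"
    "sys_C \<Sigma> \<in> carrier_mat p n" "sys_D \<Sigma> \<in> carrier_mat p p"
  using assms unfolding sys_wf_def by auto

lemma lmi_sym:
  fixes A B C D X :: "real mat"
  assumes wf: "sys_wf (A,B,C,D) n p" and X: "X \<in> carrier_mat n n" "transpose_mat X = X"
  shows "transpose_mat (pr_lmi_mat (A,B,C,D) X) = pr_lmi_mat (A,B,C,D) X"
    "pr_lmi_mat (A,B,C,D) X \<in> carrier_mat (n+p) (n+p)"
proof -
  from wf have A: "A \<in> carrier_mat n n" and B: "B \<in> carrier_mat n p" and C: "C \<in> carrier_mat p n"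
    and D: "D \<in> carrier_mat p p" unfolding sys_wf_def sys_A_def sys_B_def sys_C_def sys_D_def by auto
  have c1: "transpose_mat A * X + X * A \<in> carrier_mat n n" using A X by auto
  have c2: "X * B - transpose_mat C \<in> carrier_mat n p" using B C X by auto
  have c3: "transpose_mat B * X - C \<in> carrier_mat p n" using B C X by auto
  have c4: "- (D + transpose_mat D) \<in> carrier_mat p p" using D by auto
  have t1: "transpose_mat (transpose_mat A * X + X * A) = transpose_mat A * X + X * A"
    using A X by (simp add: transpose_add[of _ n n] transpose_mult[of _ n n] comm_add_mat[of _ n n])
  have t2: "transpose_mat (transpose_mat B * X - C) = X * B - transpose_mat C"
    using B C X by (simp add: transpose_minus[of _ p n] transpose_mult[of _ p n])
  have t3: "transpose_mat (X * B - transpose_mat C) = transpose_mat B * X - C"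
    using B C X by (simp add: transpose_minus[of _ n p] transpose_mult[of _ n n])
  have t4: "transpose_mat (- (D + transpose_mat D)) = - (D + transpose_mat D)"
    using D by (simp add: transpose_uminus transpose_add[of _ p p] comm_add_mat[of _ p p])
  show "transpose_mat (pr_lmi_mat (A,B,C,D) X) = pr_lmi_mat (A,B,C,D) X"
    unfolding pr_lmi_mat_def by (simp add: transpose_four_block_mat[OF c1 c2 c3 c4] t1 t2 t3 t4)
  show "pr_lmi_mat (A,B,C,D) X \<in> carrier_mat (n+p) (n+p)"
    unfolding pr_lmi_mat_def using four_block_carrier_mat[OF c1 c4] by simp
qed

lemma pr_lmi_iff:
  assumes wf: "sys_wf \<Sigma> n p" and X: "X \<in> carrier_mat n n" "transpose_mat X = X"
  shows "pr_lmi \<Sigma> n p X \<longleftrightarrow> (\<forall>x\<in>carrier_vec n. \<forall>v\<in>carrier_vec p. Qf \<Sigma> X x v \<le> 0)"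
proof -
  obtain A B C D where S: "\<Sigma> = (A,B,C,D)" by (cases \<Sigma>) auto
  let ?M = "pr_lmi_mat (A,B,C,D) X"
  note ls = lmi_sym[OF wf[unfolded S] X]
  have e: "psd_mat (n+p) (- ?M) \<longleftrightarrow> (\<forall>w\<in>carrier_vec (n+p). w \<bullet> (?M *\<^sub>v w) \<le> 0)"
    unfolding psd_mat_def using ls by (auto simp: transpose_uminus)
  show ?thesis unfolding pr_lmi_def S e
  proof safe
    fix x v :: "real vec" assume h: "\<forall>w\<in>carrier_vec (n+p). w \<bullet> (?M *\<^sub>v w) \<le> 0"
      and x: "x \<in> carrier_vec n" and v: "v \<in> carrier_vec p"
    from h[rule_format, of "x @\<^sub>v v"] x v lmi_form[OF wf[unfolded S] X x v]
    show "Qf (A,B,C,D) X x v \<le> 0" by auto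
  next
    fix w :: "real vec" assume h: "\<forall>x\<in>carrier_vec n. \<forall>v\<in>carrier_vec p. Qf (A,B,C,D) X x v \<le> 0"
      and w: "w \<in> carrier_vec (n+p)"
    have ww: "w = vec_first w n @\<^sub>v vec_last w p" using w by simp
    have "w \<bullet> (?M *\<^sub>v w) = 2 * Qf (A,B,C,D) X (vec_first w n) (vec_last w p)"
      by (subst ww, subst ww, rule lmi_form[OF wf[unfolded S] X], auto)
    thus "w \<bullet> (?M *\<^sub>v w) \<le> 0" using h by auto
  qed
qed

lemma diag_as_mat_diag:
  assumes "G \<in> carrier_mat n n" "diagonal_mat G"
  shows "G = mat_diag n (\<lambda>i. G $$ (i,i))"
  using assms unfolding diagonal_mat_def mat_diag_def by (intro eq_matI) auto

lemma transpose_mat_diag[simp]: "transpose_mat (mat_diag n f) = mat_diag n f"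
  unfolding mat_diag_def by (intro eq_matI) auto

lemma mat_diag_cong: "(\<And>i. i < n \<Longrightarrow> f i = f' i) \<Longrightarrow> mat_diag n f = mat_diag n f'"
  unfolding mat_diag_def by (intro eq_matI) auto

lemma balancing_props:
  assumes "balancing_transform n Xi Xo T Tinv"
  shows "T \<in> carrier_mat n n" "Tinv \<in> carrier_mat n n" "T * Tinv = 1\<^sub>m n" "Tinv * T = 1\<^sub>m n"
    "\<exists>G. sorted_pos_diag n G \<and> transpose_mat Tinv * Xo * Tinv = G"
proof -
  obtain Ri Ro U G V where ch1: "cholesky_factor n Xi Ri" and ch2: "cholesky_factor n Xo Ro" and
     oU: "orthonormal_mat n U" and oV: "orthonormal_mat n V" and sG: "sorted_pos_diag n G" and
     key: "Ro * transpose_mat Ri = U * G * transpose_mat V" and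
     Td: "T = diag_inv_sqrt n G * transpose_mat U * Ro" and
     Tid: "Tinv = transpose_mat Ri * V * diag_inv_sqrt n G"
    using assms unfolding balancing_transform_def by blast
  define g where "g = (\<lambda>i. G $$ (i,i))"
  define H where "H = mat_diag n (\<lambda>i. 1 / sqrt (g i))"
  have Ri[simp]: "Ri \<in> carrier_mat n n" and Ro[simp]: "Ro \<in> carrier_mat n n"
    and XoR: "Xo = transpose_mat Ro * Ro"
    using ch1 ch2 unfolding cholesky_factor_def by auto
  have U[simp]: "U \<in> carrier_mat n n" and UU: "transpose_mat U * U = 1\<^sub>m n"
    using oU unfolding orthonormal_mat_def by auto
  have V[simp]: "V \<in> carrier_mat n n" and VV: "transpose_mat V * V = 1\<^sub>m n"
    using oV unfolding orthonormal_mat_def by auto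
  have Gc[simp]: "G \<in> carrier_mat n n" and gpos: "\<And>i. i < n \<Longrightarrow> 0 < g i"
    using sG unfolding sorted_pos_diag_def g_def by auto
  have Gd: "G = mat_diag n g" using diag_as_mat_diag[of G n] sG unfolding sorted_pos_diag_def g_def by auto
  have Hd: "diag_inv_sqrt n G = H" unfolding diag_inv_sqrt_def H_def g_def by simp
  have H[simp]: "H \<in> carrier_mat n n" unfolding H_def by simp
  have Ut[simp]: "transpose_mat U \<in> carrier_mat n n" "transpose_mat V \<in> carrier_mat n n"
     "transpose_mat Ri \<in> carrier_mat n n" "transpose_mat Ro \<in> carrier_mat n n" by auto
  have mc[simp]: "\<And>A B. A \<in> carrier_mat n n \<Longrightarrow> B \<in> carrier_mat n n \<Longrightarrow> A * B \<in> carrier_mat n n"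
    by auto
  note as[simp] = assoc_mult_mat[of _ n n _ n _ n] left_mult_one_mat[of _ n n] right_mult_one_mat[of _ n n]
  show Tc: "T \<in> carrier_mat n n" unfolding Td Hd by simp
  show Tic: "Tinv \<in> carrier_mat n n" unfolding Tid Hd by simp
  have "T * Tinv = H * transpose_mat U * (Ro * transpose_mat Ri) * V * H"
    unfolding Td Tid Hd by simp
  also have "\<dots> = H * (transpose_mat U * U) * G * (transpose_mat V * V) * H"
    unfolding key by simp
  also have "\<dots> = H * G * H" unfolding UU VV by simp
  also have "\<dots> = mat_diag n (\<lambda>i. 1)" unfolding H_def Gd 
    by (simp del: mat_diag_one, rule mat_diag_cong, insert gpos, force simp: field_simps)
  finally show TT: "T * Tinv = 1\<^sub>m n" by simp
  show "Tinv * T = 1\<^sub>m n" by (rule mat_mult_left_right_inverse[OF Tc Tic TT])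
  have Ht: "transpose_mat H = H" unfolding H_def by simp
  have RT: "Ro * Tinv = U * G * H"
  proof -
    have "Ro * Tinv = (Ro * transpose_mat Ri) * V * H" unfolding Tid Hd by simp
    also have "\<dots> = U * G * (transpose_mat V * V) * H" unfolding key by simp
    finally show ?thesis unfolding VV by simp
  qed
  have "transpose_mat Tinv * Xo * Tinv = transpose_mat (Ro * Tinv) * (Ro * Tinv)"
    unfolding XoR using Tic by (simp add: transpose_mult[of _ n n _ n])
  also have "\<dots> = H * G * (transpose_mat U * U) * G * H"
    unfolding RT using Ht by (simp add: transpose_mult[of _ n n _ n] Gd)
  also have "\<dots> = G" unfolding UU H_def Gd
    by (simp del: mat_diag_one, rule mat_diag_cong, insert gpos, force simp: field_simps)
  finally show "\<exists>G. sorted_pos_diag n G \<and> transpose_mat Tinv * Xo * Tinv = G" using sG by blast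
qed

lemma diag_mult_vec:
  fixes G :: "real mat"
  assumes "G \<in> carrier_mat n n" "diagonal_mat G" "w \<in> carrier_vec n" "i < n"
  shows "(G *\<^sub>v w) $ i = G $$ (i,i) * w $ i"
proof -
  have "(G *\<^sub>v w) $ i = (\<Sum>k\<in>{0..<n}. G $$ (i,k) * w $ k)"
    using assms by (simp add: mult_mat_vec_def scalar_prod_def)
  also have "\<dots> = G $$ (i,i) * w $ i + (\<Sum>k\<in>{0..<n} - {i}. G $$ (i,k) * w $ k)"
    using assms by (subst sum.remove[of _ i]) auto
  also have "(\<Sum>k\<in>{0..<n} - {i}. G $$ (i,k) * w $ k) = 0"
    using assms unfolding diagonal_mat_def by (intro sum.neutral) auto
  finally show ?thesis by simp
qed

lemma sum_trunc:
  fixes f a :: "nat \<Rightarrow> real"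
  assumes "r \<le> n"
  shows "(\<Sum>k\<in>{0..<n}. f k * (if k < r then a k else 0)) = (\<Sum>k\<in>{0..<r}. f k * a k)"
proof -
  have "(\<Sum>k\<in>{0..<n}. f k * (if k < r then a k else 0)) = (\<Sum>k\<in>{0..<r}. f k * (if k < r then a k else 0))"
    using assms by (intro sum.mono_neutral_right) auto
  also have "\<dots> = (\<Sum>k\<in>{0..<r}. f k * a k)" by (intro sum.cong) auto
  finally show ?thesis .
qed

lemma trunc_Q:
  fixes At Bt Ct G D :: "real mat"
  assumes At: "At \<in> carrier_mat n n" and Bt: "Bt \<in> carrier_mat n p" and Ct: "Ct \<in> carrier_mat p n"
    and D: "D \<in> carrier_mat p p"
    and G: "G \<in> carrier_mat n n" "diagonal_mat G" and r: "r \<le> n"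
    and x: "x \<in> carrier_vec r" and u: "u \<in> carrier_vec p"
  defines "y \<equiv> vec n (\<lambda>i. if i < r then x $ i else 0)"
  shows "Qf (mat r r (\<lambda>(i,j). At $$ (i,j)), mat r p (\<lambda>(i,j). Bt $$ (i,j)),
             mat p r (\<lambda>(i,j). Ct $$ (i,j)), D) (mat r r (\<lambda>(i,j). G $$ (i,j))) x u
       = y \<bullet> (G *\<^sub>v (At *\<^sub>v y + Bt *\<^sub>v u)) - u \<bullet> (Ct *\<^sub>v y + D *\<^sub>v u)"
proof -
  let ?Ar = "mat r r (\<lambda>(i,j). At $$ (i,j))" and ?Br = "mat r p (\<lambda>(i,j). Bt $$ (i,j))"
  let ?Cr = "mat p r (\<lambda>(i,j). Ct $$ (i,j))" and ?Gr = "mat r r (\<lambda>(i,j). G $$ (i,j))"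
  have y: "y \<in> carrier_vec n" unfolding y_def by simp
  have C1: "?Cr *\<^sub>v x = Ct *\<^sub>v y"
  proof (rule eq_vecI)
    fix i assume "i < dim_vec (Ct *\<^sub>v y)"
    hence i: "i < p" using Ct by simp
    have "(Ct *\<^sub>v y) $ i = (\<Sum>k\<in>{0..<n}. Ct $$ (i,k) * (if k < r then x $ k else 0))"
      using Ct i unfolding y_def by (simp add: mult_mat_vec_def scalar_prod_def)
    also have "\<dots> = (\<Sum>k\<in>{0..<r}. Ct $$ (i,k) * x $ k)" by (rule sum_trunc[OF r])
    also have "\<dots> = (?Cr *\<^sub>v x) $ i" using i x r by (simp add: mult_mat_vec_def scalar_prod_def)
    finally show "(?Cr *\<^sub>v x) $ i = (Ct *\<^sub>v y) $ i" by simp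
  qed (use Ct in simp)
  let ?z = "?Ar *\<^sub>v x + ?Br *\<^sub>v u" and ?w = "At *\<^sub>v y + Bt *\<^sub>v u"
  have zc: "?z \<in> carrier_vec r" using u x by (intro add_carrier_vec mult_mat_vec_carrier) auto
  have wc: "?w \<in> carrier_vec n" using At Bt y u by (intro add_carrier_vec mult_mat_vec_carrier) auto
  have zw: "?z $ i = ?w $ i" if i: "i < r" for i
  proof -
    have "(At *\<^sub>v y) $ i = (\<Sum>k\<in>{0..<n}. At $$ (i,k) * (if k < r then x $ k else 0))"
      using At i r unfolding y_def by (simp add: mult_mat_vec_def scalar_prod_def)
    also have "\<dots> = (\<Sum>k\<in>{0..<r}. At $$ (i,k) * x $ k)" by (rule sum_trunc[OF r])
    finally have 1: "(At *\<^sub>v y) $ i = (?Ar *\<^sub>v x) $ i" using i x r by (simp add: mult_mat_vec_def scalar_prod_def)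
    have 2: "(Bt *\<^sub>v u) $ i = (?Br *\<^sub>v u) $ i" using i x r u Bt by (simp add: mult_mat_vec_def scalar_prod_def)
    show ?thesis using 1 2 i r At Bt by simp
  qed
  have Grd: "diagonal_mat ?Gr" using G r unfolding diagonal_mat_def by auto
  have "x \<bullet> (?Gr *\<^sub>v ?z) = (\<Sum>i\<in>{0..<r}. x $ i * (G $$ (i,i) * ?w $ i))"
  proof -
    have "(?Gr *\<^sub>v ?z) $ i = G $$ (i,i) * ?w $ i" if i: "i < r" for i
      using diag_mult_vec[OF _ Grd zc i] zw[OF i] i r by simp
    thus ?thesis unfolding scalar_prod_def using x by (intro sum.cong) auto
  qed
  also have "\<dots> = (\<Sum>i\<in>{0..<n}. (G $$ (i,i) * ?w $ i) * (if i < r then x $ i else 0))"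
    by (subst sum_trunc[OF r]) (auto simp: ac_simps)
  also have "\<dots> = y \<bullet> (G *\<^sub>v ?w)"
  proof -
    have "(G *\<^sub>v ?w) $ i = G $$ (i,i) * ?w $ i" if i: "i < n" for i
      using diag_mult_vec[OF G wc i] .
    moreover have "y $ i = (if i < r then x $ i else 0)" if i: "i < n" for i
      unfolding y_def using i by simp
    ultimately show ?thesis unfolding scalar_prod_def using wc G y
      by (intro sum.cong) (auto simp: ac_simps)
  qed
  finally show ?thesis unfolding Qf_def sys_A_def sys_B_def sys_C_def sys_D_def using C1 by simp
qed

lemma pd_diag_trunc:
  fixes G :: "real mat"
  assumes sG: "sorted_pos_diag n G" and r: "r \<le> n"
  shows "pd_mat r (mat r r (\<lambda>(i,j). G $$ (i,j)))"
proof -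
  let ?Gr = "mat r r (\<lambda>(i,j). G $$ (i,j))"
  have G: "G \<in> carrier_mat n n" "diagonal_mat G" and pos: "\<And>i. i < n \<Longrightarrow> 0 < G $$ (i,i)"
    using sG unfolding sorted_pos_diag_def by auto
  have Grd: "diagonal_mat ?Gr" using G r unfolding diagonal_mat_def by auto
  have Grc: "?Gr \<in> carrier_mat r r" by simp
  have "transpose_mat ?Gr = ?Gr" using Grd unfolding diagonal_mat_def
    by (intro eq_matI) (auto, metis)
  moreover have "0 < v \<bullet> (?Gr *\<^sub>v v)" if v: "v \<in> carrier_vec r" "v \<noteq> 0\<^sub>v r" for v
  proof -
    obtain k where k: "k < r" "v $ k \<noteq> 0"
      using v by (metis carrier_vecD eq_vecI index_zero_vec(1) index_zero_vec(2))
    have "v \<bullet> (?Gr *\<^sub>v v) = (\<Sum>i\<in>{0..<r}. v $ i * (G $$ (i,i) * v $ i))"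
      unfolding scalar_prod_def using v r diag_mult_vec[OF Grc Grd v(1)] by (intro sum.cong) auto
    also have "\<dots> > 0"
    proof (rule sum_pos2[of _ k])
      have "0 < v $ k * v $ k" using k by (metis not_real_square_gt_zero)
      hence "0 < G $$ (k,k) * (v $ k * v $ k)" using k pos[of k] r by simp
      thus "0 < v $ k * (G $$ (k,k) * v $ k)" by (simp add: ac_simps)
      fix i assume "i \<in> {0..<r}"
      hence "0 < G $$ (i,i)" using pos r by auto
      hence "0 \<le> G $$ (i,i) * (v $ i * v $ i)" by simp
      thus "0 \<le> v $ i * (G $$ (i,i) * v $ i)" by (simp add: ac_simps)
    qed (use k in auto)
    finally show ?thesis .
  qed
  ultimately show ?thesis unfolding pd_mat_def using Grc by auto
qed

lemma trunc_passive:
  assumes wf: "sys_wf \<Sigma> n p" and Xpd: "pd_mat n X" and lmi: "pr_lmi \<Sigma> n p X"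
    and bt: "balancing_transform n Xi X T Tinv" and r: "r \<le> n"
  shows "sys_wf (truncate_balanced r \<Sigma> T Tinv) r p
    \<and> pd_mat r (mat r r (\<lambda>(i,j). (transpose_mat Tinv * X * Tinv) $$ (i,j)))
    \<and> pr_lmi (truncate_balanced r \<Sigma> T Tinv) r p (mat r r (\<lambda>(i,j). (transpose_mat Tinv * X * Tinv) $$ (i,j)))"
proof -
  obtain A B C D where S: "\<Sigma> = (A,B,C,D)" by (cases \<Sigma>) auto
  have A: "A \<in> carrier_mat n n" and B: "B \<in> carrier_mat n p" and C: "C \<in> carrier_mat p n"
    and D: "D \<in> carrier_mat p p" using wf_carr[OF wf] unfolding S sys_A_def sys_B_def sys_C_def sys_D_def by auto
  have X: "X \<in> carrier_mat n n" "transpose_mat X = X" using Xpd unfolding pd_mat_def by auto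
  note bp = balancing_props[OF bt]
  have T: "T \<in> carrier_mat n n" and Ti: "Tinv \<in> carrier_mat n n" and TiT: "Tinv * T = 1\<^sub>m n"
    using bp by auto
  have mc[simp]: "\<And>A B. A \<in> carrier_mat n n \<Longrightarrow> B \<in> carrier_mat n n \<Longrightarrow> A * B \<in> carrier_mat n n"
    by auto
  have Tit[simp]: "transpose_mat Tinv \<in> carrier_mat n n" using Ti by simp
  note nn[simp] = assoc_mult_mat[of _ n n _ n _ n] assoc_mult_mat_vec[of _ n n _ n]
  obtain G where sG: "sorted_pos_diag n G" and GX: "transpose_mat Tinv * X * Tinv = G" using bp by blast
  have G: "G \<in> carrier_mat n n" "diagonal_mat G" using sG unfolding sorted_pos_diag_def by auto
  define At where "At = T * A * Tinv"
  define Bt where "Bt = T * B"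
  define Ct where "Ct = C * Tinv"
  have Atc: "At \<in> carrier_mat n n" unfolding At_def using T A Ti by auto
  have Btc: "Bt \<in> carrier_mat n p" unfolding Bt_def using T B by auto
  have Ctc: "Ct \<in> carrier_mat p n" unfolding Ct_def using C Ti by auto
  have dB: "dim_col B = p" using B by auto
  have TR: "truncate_balanced r \<Sigma> T Tinv = (mat r r (\<lambda>(i,j). At $$ (i,j)), mat r p (\<lambda>(i,j). Bt $$ (i,j)),
             mat p r (\<lambda>(i,j). Ct $$ (i,j)), D)"
    unfolding S truncate_balanced_def At_def Bt_def Ct_def Let_def by (simp add: dB)
  let ?Gr = "mat r r (\<lambda>(i,j). G $$ (i,j))"
  have wfr: "sys_wf (truncate_balanced r \<Sigma> T Tinv) r p"
    unfolding TR sys_wf_def sys_A_def sys_B_def sys_C_def sys_D_def using D by simp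
  have pdr: "pd_mat r ?Gr" by (rule pd_diag_trunc[OF sG r])
  have "pr_lmi (truncate_balanced r \<Sigma> T Tinv) r p ?Gr"
  proof (subst pr_lmi_iff[OF wfr])
    show "?Gr \<in> carrier_mat r r" "transpose_mat ?Gr = ?Gr" using pdr unfolding pd_mat_def by auto
    have lmi': "\<forall>x\<in>carrier_vec n. \<forall>v\<in>carrier_vec p. Qf \<Sigma> X x v \<le> 0"
      using pr_lmi_iff[OF wf X] lmi by auto
    show "\<forall>x\<in>carrier_vec r. \<forall>u\<in>carrier_vec p. Qf (truncate_balanced r \<Sigma> T Tinv) ?Gr x u \<le> 0"
    proof (intro ballI)
      fix x u :: "real vec" assume x: "x \<in> carrier_vec r" and u: "u \<in> carrier_vec p"
      define y where "y = vec n (\<lambda>i. if i < r then x $ i else (0::real))"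
      have y: "y \<in> carrier_vec n" unfolding y_def by simp
      let ?x = "Tinv *\<^sub>v y"
      have xc: "?x \<in> carrier_vec n" using Ti y by simp
      let ?z = "A *\<^sub>v ?x + B *\<^sub>v u"
      have zc: "?z \<in> carrier_vec n" using A B xc u by (metis add_carrier_vec mult_mat_vec_carrier)
      have e1: "At *\<^sub>v y + Bt *\<^sub>v u = T *\<^sub>v ?z"
        unfolding At_def Bt_def using T A Ti B y u xc
        by (simp add: mult_add_distrib_mat_vec[of T n n] assoc_mult_mat_vec[of T n n "A * Tinv" n] assoc_mult_mat_vec[of A n n Tinv n])
      have e2: "G *\<^sub>v (T *\<^sub>v ?z) = transpose_mat Tinv *\<^sub>v (X *\<^sub>v ?z)"
      proof -
        have "G *\<^sub>v (T *\<^sub>v ?z) = (transpose_mat Tinv * X * Tinv * T) *\<^sub>v ?z"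
          unfolding GX[symmetric] using T Ti X zc by simp
        also have "transpose_mat Tinv * X * Tinv * T = transpose_mat Tinv * X * (Tinv * T)"
          using T Ti X by simp
        also have "\<dots> = transpose_mat Tinv * X" unfolding TiT using Ti X by simp
        finally show ?thesis using Ti X zc by simp
      qed
      have e3: "y \<bullet> (transpose_mat Tinv *\<^sub>v (X *\<^sub>v ?z)) = ?x \<bullet> (X *\<^sub>v ?z)"
        using tr_dot[OF Ti y, of "X *\<^sub>v ?z"] X zc by simp
      have e4: "Ct *\<^sub>v y = C *\<^sub>v ?x" unfolding Ct_def using C Ti y by simp
      have "Qf (truncate_balanced r \<Sigma> T Tinv) ?Gr x u
          = y \<bullet> (G *\<^sub>v (At *\<^sub>v y + Bt *\<^sub>v u)) - u \<bullet> (Ct *\<^sub>v y + D *\<^sub>v u)"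
        unfolding TR y_def by (rule trunc_Q[OF Atc Btc Ctc D G r x u])
      also have "\<dots> = Qf \<Sigma> X ?x u"
        unfolding e1 e2 e3 e4 Qf_def S sys_A_def sys_B_def sys_C_def sys_D_def by simp
      also have "\<dots> \<le> 0" using lmi' xc u by auto
      finally show "Qf (truncate_balanced r \<Sigma> T Tinv) ?Gr x u \<le> 0" .
    qed
  qed
  thus ?thesis using wfr pdr GX by simp
qed

lemma zero_mat_mult_vec[simp]: "v \<in> carrier_vec m \<Longrightarrow> (0\<^sub>m n m :: real mat) *\<^sub>v v = 0\<^sub>v n"
  by (intro eq_vecI) (auto simp: mult_mat_vec_def scalar_prod_def)

lemma blockdiag_mult_vec:
  fixes A B :: "real mat"
  assumes "A \<in> carrier_mat n1 m1" "B \<in> carrier_mat n2 m2" "x \<in> carrier_vec m1" "y \<in> carrier_vec m2"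
  shows "four_block_mat A (0\<^sub>m n1 m2) (0\<^sub>m n2 m1) B *\<^sub>v (x @\<^sub>v y) = (A *\<^sub>v x) @\<^sub>v (B *\<^sub>v y)"
  using assms by (subst four_block_mat_mult_vec[of _ n1 m1 _ m2 _ n2]) auto

lemma is_passive_iff:
  "is_passive \<Sigma> \<longleftrightarrow> (\<exists>X. sys_wf \<Sigma> (sdim \<Sigma>) (iodim \<Sigma>) \<and> pd_mat (sdim \<Sigma>) X \<and> pr_lmi \<Sigma> (sdim \<Sigma>) (iodim \<Sigma>) X)"
proof
  assume "is_passive \<Sigma>"
  then obtain n p X where h: "sys_wf \<Sigma> n p" "pd_mat n X" "pr_lmi \<Sigma> n p X" unfolding is_passive_def by blast
  have "sdim \<Sigma> = n" "iodim \<Sigma> = p" using h(1) unfolding sys_wf_def sdim_def iodim_def by auto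
  thus "\<exists>X. sys_wf \<Sigma> (sdim \<Sigma>) (iodim \<Sigma>) \<and> pd_mat (sdim \<Sigma>) X \<and> pr_lmi \<Sigma> (sdim \<Sigma>) (iodim \<Sigma>) X"
    using h by auto
qed (auto simp: is_passive_def)

lemma parallel_Cons:
  assumes "sys_wf \<Sigma> n1 p1" "sys_wf (parallel \<Sigma>s) n2 p2"
  shows "parallel (\<Sigma> # \<Sigma>s) =
    (four_block_mat (sys_A \<Sigma>) (0\<^sub>m n1 n2) (0\<^sub>m n2 n1) (sys_A (parallel \<Sigma>s)),
     four_block_mat (sys_B \<Sigma>) (0\<^sub>m n1 p2) (0\<^sub>m n2 p1) (sys_B (parallel \<Sigma>s)),
     four_block_mat (sys_C \<Sigma>) (0\<^sub>m p1 n2) (0\<^sub>m p2 n1) (sys_C (parallel \<Sigma>s)),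
     four_block_mat (sys_D \<Sigma>) (0\<^sub>m p1 p2) (0\<^sub>m p2 p1) (sys_D (parallel \<Sigma>s)))"
proof -
  obtain A B C D where S: "\<Sigma> = (A,B,C,D)" by (cases \<Sigma>) auto
  have d1: "A \<in> carrier_mat n1 n1" "B \<in> carrier_mat n1 p1" "C \<in> carrier_mat p1 n1" "D \<in> carrier_mat p1 p1"
    using wf_carr[OF assms(1)] unfolding S sys_A_def sys_B_def sys_C_def sys_D_def by auto
  have d2: "diag_block_mat (map sys_A \<Sigma>s) \<in> carrier_mat n2 n2" "diag_block_mat (map sys_B \<Sigma>s) \<in> carrier_mat n2 p2"
     "diag_block_mat (map sys_C \<Sigma>s) \<in> carrier_mat p2 n2" "diag_block_mat (map sys_D \<Sigma>s) \<in> carrier_mat p2 p2"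
    using wf_carr[OF assms(2)] unfolding parallel_def sys_A_def sys_B_def sys_C_def sys_D_def by auto
  show ?thesis unfolding S parallel_def using d1 d2
    by (simp add: sys_A_def sys_B_def sys_C_def sys_D_def Let_def)
qed

lemma parallel_passive:
  assumes "\<forall>\<Sigma>\<in>set \<Sigma>s. is_passive \<Sigma>"
  shows "\<exists>X. sys_wf (parallel \<Sigma>s) (sum_list (map sdim \<Sigma>s)) (sum_list (map iodim \<Sigma>s))
     \<and> pd_mat (sum_list (map sdim \<Sigma>s)) X \<and> pr_lmi (parallel \<Sigma>s) (sum_list (map sdim \<Sigma>s)) (sum_list (map iodim \<Sigma>s)) X"
  using assms
proof (induction \<Sigma>s)
  case Nil
  have wf: "sys_wf (parallel []) 0 0" unfolding parallel_def sys_wf_def sys_A_def sys_B_def sys_C_def sys_D_def by simp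
  have v0: "\<And>v::real vec. v \<in> carrier_vec 0 \<Longrightarrow> v = 0\<^sub>v 0" by (intro eq_vecI) auto
  have pd: "pd_mat 0 (0\<^sub>m 0 0)" unfolding pd_mat_def using v0 by auto
  have "pr_lmi (parallel []) 0 0 (0\<^sub>m 0 0)"
    by (subst pr_lmi_iff[OF wf]) (auto simp: Qf_def scalar_prod_def parallel_def sys_A_def sys_B_def sys_C_def sys_D_def)
  thus ?case using wf pd by auto
next
  case (Cons \<Sigma> \<Sigma>s)
  let ?n1 = "sdim \<Sigma>" and ?p1 = "iodim \<Sigma>"
  let ?n2 = "sum_list (map sdim \<Sigma>s)" and ?p2 = "sum_list (map iodim \<Sigma>s)"
  obtain X1 where h1: "sys_wf \<Sigma> ?n1 ?p1" "pd_mat ?n1 X1" "pr_lmi \<Sigma> ?n1 ?p1 X1"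
    using Cons.prems is_passive_iff by auto
  obtain X2 where h2: "sys_wf (parallel \<Sigma>s) ?n2 ?p2" "pd_mat ?n2 X2" "pr_lmi (parallel \<Sigma>s) ?n2 ?p2 X2"
    using Cons by auto
  note c1 = wf_carr[OF h1(1)] and c2 = wf_carr[OF h2(1)]
  have X1: "X1 \<in> carrier_mat ?n1 ?n1" "transpose_mat X1 = X1" using h1(2) unfolding pd_mat_def by auto
  have X2: "X2 \<in> carrier_mat ?n2 ?n2" "transpose_mat X2 = X2" using h2(2) unfolding pd_mat_def by auto
  define X where "X = four_block_mat X1 (0\<^sub>m ?n1 ?n2) (0\<^sub>m ?n2 ?n1) X2"
  note PC = parallel_Cons[OF h1(1) h2(1)]
  have sn: "sum_list (map sdim (\<Sigma> # \<Sigma>s)) = ?n1 + ?n2" "sum_list (map iodim (\<Sigma> # \<Sigma>s)) = ?p1 + ?p2" by auto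
  have wf: "sys_wf (parallel (\<Sigma> # \<Sigma>s)) (?n1 + ?n2) (?p1 + ?p2)"
    unfolding sys_wf_def PC using c1 c2 by (simp add: sys_A_def sys_B_def sys_C_def sys_D_def)
  have Xc: "X \<in> carrier_mat (?n1 + ?n2) (?n1 + ?n2)" unfolding X_def using X1 X2 by auto
  have Xt: "transpose_mat X = X" unfolding X_def using X1 X2
    by (subst transpose_four_block_mat[of _ ?n1 ?n1 _ ?n2 _ ?n2]) auto
  have split: "\<And>w. w \<in> carrier_vec (a + b) \<Longrightarrow> w = vec_first w a @\<^sub>v vec_last w b" for a b by simp
  have Xform: "(x1 @\<^sub>v x2) \<bullet> (X *\<^sub>v (x1 @\<^sub>v x2)) = x1 \<bullet> (X1 *\<^sub>v x1) + x2 \<bullet> (X2 *\<^sub>v x2)"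
    if "x1 \<in> carrier_vec ?n1" "x2 \<in> carrier_vec ?n2" for x1 x2
    unfolding X_def using that X1 X2
    by (subst blockdiag_mult_vec[of _ ?n1 ?n1 _ ?n2 ?n2]) (auto intro!: scalar_prod_append)
  have psd1: "0 \<le> x \<bullet> (X1 *\<^sub>v x)" if "x \<in> carrier_vec ?n1" for x
    using h1(2) that unfolding pd_mat_def
    by (cases "x = 0\<^sub>v ?n1") (auto simp: less_imp_le)
  have psd2: "0 \<le> x \<bullet> (X2 *\<^sub>v x)" if "x \<in> carrier_vec ?n2" for x
    using h2(2) that unfolding pd_mat_def
    by (cases "x = 0\<^sub>v ?n2") (auto simp: less_imp_le)
  have pd: "pd_mat (?n1 + ?n2) X" unfolding pd_mat_def
  proof (intro conjI Xc Xt ballI impI)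
    fix w :: "real vec" assume w: "w \<in> carrier_vec (?n1 + ?n2)" "w \<noteq> 0\<^sub>v (?n1 + ?n2)"
    let ?x1 = "vec_first w ?n1" and ?x2 = "vec_last w ?n2"
    have ww: "w = ?x1 @\<^sub>v ?x2" using w by simp
    have "?x1 \<noteq> 0\<^sub>v ?n1 \<or> ?x2 \<noteq> 0\<^sub>v ?n2"
    proof (rule ccontr)
      assume "\<not> ?thesis"
      hence "w = 0\<^sub>v ?n1 @\<^sub>v 0\<^sub>v ?n2" using ww by auto
      also have "\<dots> = 0\<^sub>v (?n1 + ?n2)" by (intro eq_vecI) auto
      finally show False using w by simp
    qed
    moreover have "0 < ?x1 \<bullet> (X1 *\<^sub>v ?x1)" if "?x1 \<noteq> 0\<^sub>v ?n1"
      using h1(2) that unfolding pd_mat_def by auto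
    moreover have "0 < ?x2 \<bullet> (X2 *\<^sub>v ?x2)" if "?x2 \<noteq> 0\<^sub>v ?n2"
      using h2(2) that unfolding pd_mat_def by auto
    ultimately have "0 < ?x1 \<bullet> (X1 *\<^sub>v ?x1) + ?x2 \<bullet> (X2 *\<^sub>v ?x2)"
      using psd1[of ?x1] psd2[of ?x2] by auto
    thus "0 < w \<bullet> (X *\<^sub>v w)" using Xform[of ?x1 ?x2] ww by simp
  qed
  have Qsplit: "Qf (parallel (\<Sigma> # \<Sigma>s)) X (x1 @\<^sub>v x2) (v1 @\<^sub>v v2) = Qf \<Sigma> X1 x1 v1 + Qf (parallel \<Sigma>s) X2 x2 v2"
    if x1: "x1 \<in> carrier_vec ?n1" and x2: "x2 \<in> carrier_vec ?n2"
      and v1: "v1 \<in> carrier_vec ?p1" and v2: "v2 \<in> carrier_vec ?p2" for x1 x2 v1 v2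
  proof -
    let ?A1 = "sys_A \<Sigma>" and ?B1 = "sys_B \<Sigma>" and ?C1 = "sys_C \<Sigma>" and ?D1 = "sys_D \<Sigma>"
    let ?A2 = "sys_A (parallel \<Sigma>s)" and ?B2 = "sys_B (parallel \<Sigma>s)"
    let ?C2 = "sys_C (parallel \<Sigma>s)" and ?D2 = "sys_D (parallel \<Sigma>s)"
    have e1: "sys_A (parallel (\<Sigma> # \<Sigma>s)) *\<^sub>v (x1 @\<^sub>v x2) + sys_B (parallel (\<Sigma> # \<Sigma>s)) *\<^sub>v (v1 @\<^sub>v v2)
       = (?A1 *\<^sub>v x1 + ?B1 *\<^sub>v v1) @\<^sub>v (?A2 *\<^sub>v x2 + ?B2 *\<^sub>v v2)"
      unfolding PC sys_A_def[of "(_,_,_,_)"] sys_B_def[of "(_,_,_,_)"] using c1 c2 x1 x2 v1 v2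
      by (simp add: blockdiag_mult_vec[of _ ?n1 ?n1 _ ?n2 ?n2] blockdiag_mult_vec[of _ ?n1 ?p1 _ ?n2 ?p2]
          append_vec_add[of _ ?n1 _ _ ?n2])
    have e2: "sys_C (parallel (\<Sigma> # \<Sigma>s)) *\<^sub>v (x1 @\<^sub>v x2) + sys_D (parallel (\<Sigma> # \<Sigma>s)) *\<^sub>v (v1 @\<^sub>v v2)
       = (?C1 *\<^sub>v x1 + ?D1 *\<^sub>v v1) @\<^sub>v (?C2 *\<^sub>v x2 + ?D2 *\<^sub>v v2)"
      unfolding PC sys_C_def[of "(_,_,_,_)"] sys_D_def[of "(_,_,_,_)"] using c1 c2 x1 x2 v1 v2
      by (simp add: blockdiag_mult_vec[of _ ?p1 ?n1 _ ?p2 ?n2] blockdiag_mult_vec[of _ ?p1 ?p1 _ ?p2 ?p2]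
          append_vec_add[of _ ?p1 _ _ ?p2])
    have z1: "?A1 *\<^sub>v x1 + ?B1 *\<^sub>v v1 \<in> carrier_vec ?n1" using c1 x1 v1 by (metis add_carrier_vec mult_mat_vec_carrier)
    have z2: "?A2 *\<^sub>v x2 + ?B2 *\<^sub>v v2 \<in> carrier_vec ?n2" using c2 x2 v2 by (metis add_carrier_vec mult_mat_vec_carrier)
    have y1: "?C1 *\<^sub>v x1 + ?D1 *\<^sub>v v1 \<in> carrier_vec ?p1" using c1 x1 v1 by (metis add_carrier_vec mult_mat_vec_carrier)
    have y2: "?C2 *\<^sub>v x2 + ?D2 *\<^sub>v v2 \<in> carrier_vec ?p2" using c2 x2 v2 by (metis add_carrier_vec mult_mat_vec_carrier)
    show ?thesis unfolding Qf_def e1 e2 X_def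
      using X1 X2 z1 z2 y1 y2 x1 x2 v1 v2
      by (simp add: blockdiag_mult_vec[of _ ?n1 ?n1 _ ?n2 ?n2] scalar_prod_append[of _ ?n1 _ ?n2]
           scalar_prod_append[of _ ?p1 _ ?p2])
  qed
  have Q1: "\<forall>x\<in>carrier_vec ?n1. \<forall>v\<in>carrier_vec ?p1. Qf \<Sigma> X1 x v \<le> 0"
    using pr_lmi_iff[OF h1(1) X1] h1(3) by auto
  have Q2: "\<forall>x\<in>carrier_vec ?n2. \<forall>v\<in>carrier_vec ?p2. Qf (parallel \<Sigma>s) X2 x v \<le> 0"
    using pr_lmi_iff[OF h2(1) X2] h2(3) by auto
  have "pr_lmi (parallel (\<Sigma> # \<Sigma>s)) (?n1 + ?n2) (?p1 + ?p2) X"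
  proof (subst pr_lmi_iff[OF wf Xc Xt], intro ballI)
    fix x v :: "real vec" assume x: "x \<in> carrier_vec (?n1 + ?n2)" and v: "v \<in> carrier_vec (?p1 + ?p2)"
    have xx: "x = vec_first x ?n1 @\<^sub>v vec_last x ?n2" using x by simp
    have vv: "v = vec_first v ?p1 @\<^sub>v vec_last v ?p2" using v by simp
    show "Qf (parallel (\<Sigma> # \<Sigma>s)) X x v \<le> 0"
      using Qsplit[of "vec_first x ?n1" "vec_last x ?n2" "vec_first v ?p1" "vec_last v ?p2"]
        Q1 Q2 xx vv by (smt (verit) vec_first_carrier vec_last_carrier)
  qed
  thus ?case using wf pd sn by auto
qed

lemma inv_mat_props:
  fixes M :: "real mat"
  assumes "invertible_mat M" "M \<in> carrier_mat q q"
  shows "inv_mat q M \<in> carrier_mat q q" "M * inv_mat q M = 1\<^sub>m q" "inv_mat q M * M = 1\<^sub>m q"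
proof -
  obtain N where N: "M * N = 1\<^sub>m q" "N * M = 1\<^sub>m (dim_row N)"
    using assms unfolding invertible_mat_def inverts_mat_def by auto
  have "dim_col N = q" using arg_cong[OF N(1), of dim_col] by simp
  moreover have "dim_row N = q" using arg_cong[OF N(2), of dim_col] assms(2) by simp
  ultimately have "N \<in> carrier_mat q q \<and> M * N = 1\<^sub>m q \<and> N * M = 1\<^sub>m q" using N by auto
  hence "\<exists>N. N \<in> carrier_mat q q \<and> M * N = 1\<^sub>m q \<and> N * M = 1\<^sub>m q" by blast
  from someI_ex[OF this] show "inv_mat q M \<in> carrier_mat q q" "M * inv_mat q M = 1\<^sub>m q" "inv_mat q M * M = 1\<^sub>m q"
    unfolding inv_mat_def by auto
qed

lemma vL1: "a \<in> carrier_vec k \<Longrightarrow> b \<in> carrier_vec k \<Longrightarrow> (c :: real vec) \<in> carrier_vec k \<Longrightarrow>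
  a + c = b \<Longrightarrow> c = b - a"
  by (intro eq_vecI) (auto simp: vec_eq_iff)

lemma vL2: "(v :: real vec) \<in> carrier_vec k \<Longrightarrow> p \<in> carrier_vec k \<Longrightarrow> b \<in> carrier_vec k \<Longrightarrow>
  s \<in> carrier_vec k \<Longrightarrow> v + p = b - s \<Longrightarrow> sz = s + p \<Longrightarrow> b = v + sz"
  by (intro eq_vecI) (auto simp: vec_eq_iff)

lemma vL3: "(a :: real vec) \<in> carrier_vec k \<Longrightarrow> p \<in> carrier_vec k \<Longrightarrow> q \<in> carrier_vec k \<Longrightarrow>
  (a - p) + q = a + (q - p)"
  by (intro eq_vecI) auto

lemma vL4: "(w :: real vec) \<in> carrier_vec k \<Longrightarrow> p \<in> carrier_vec k \<Longrightarrow> q \<in> carrier_vec k \<Longrightarrow>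
  w + (q - p) = (w - p) + q"
  by (intro eq_vecI) auto

lemma assoc3_vec:
  fixes A B C :: "real mat"
  assumes "A \<in> carrier_mat a b" "B \<in> carrier_mat b c" "C \<in> carrier_mat c d" "x \<in> carrier_vec d"
  shows "(A * B * C) *\<^sub>v x = A *\<^sub>v (B *\<^sub>v (C *\<^sub>v x))"
proof -
  have "(A * B * C) *\<^sub>v x = (A * B) *\<^sub>v (C *\<^sub>v x)"
    by (rule assoc_mult_mat_vec[OF mult_carrier_mat[OF assms(1,2)] assms(3,4)])
  also have "\<dots> = A *\<^sub>v (B *\<^sub>v (C *\<^sub>v x))"
    by (rule assoc_mult_mat_vec[OF assms(1,2) mult_mat_vec_carrier[OF assms(3,4)]])
  finally show ?thesis .
qed

lemma assoc4_vec:
  fixes A B C E :: "real mat"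
  assumes "A \<in> carrier_mat a b" "B \<in> carrier_mat b c" "C \<in> carrier_mat c d" "E \<in> carrier_mat d e"
    "x \<in> carrier_vec e"
  shows "(A * B * C * E) *\<^sub>v x = A *\<^sub>v (B *\<^sub>v (C *\<^sub>v (E *\<^sub>v x)))"
proof -
  have "(A * B * C * E) *\<^sub>v x = (A * B * C) *\<^sub>v (E *\<^sub>v x)"
    by (rule assoc_mult_mat_vec[OF mult_carrier_mat[OF mult_carrier_mat[OF assms(1,2)] assms(3)] assms(4,5)])
  also have "\<dots> = A *\<^sub>v (B *\<^sub>v (C *\<^sub>v (E *\<^sub>v x)))"
    by (rule assoc3_vec[OF assms(1,2,3) mult_mat_vec_carrier[OF assms(4,5)]])
  finally show ?thesis .
qed

lemma interconnect_passive:
  fixes A B C D S Bc X :: "real mat"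
  assumes wf: "sys_wf (A,B,C,D) n q" and Xpd: "pd_mat n X" and lmi: "pr_lmi (A,B,C,D) n q X"
    and Spsd: "psd_mat q S" and Bc: "Bc \<in> carrier_mat q m"
    and inv1: "invertible_mat (1\<^sub>m q + S * D)" and inv2: "invertible_mat (1\<^sub>m q + D * S)"
  shows "sys_wf (interconnect (A,B,C,D) S Bc) n m \<and> pr_lmi (interconnect (A,B,C,D) S Bc) n m X"
proof -
  have A: "A \<in> carrier_mat n n" and B: "B \<in> carrier_mat n q" and C: "C \<in> carrier_mat q n"
    and D: "D \<in> carrier_mat q q" using wf_carr[OF wf] unfolding sys_A_def sys_B_def sys_C_def sys_D_def by auto
  have X: "X \<in> carrier_mat n n" "transpose_mat X = X" using Xpd unfolding pd_mat_def by auto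
  have S: "S \<in> carrier_mat q q" using Spsd unfolding psd_mat_def by auto
  define D1 where "D1 = inv_mat q (1\<^sub>m q + D * S)"
  define D2 where "D2 = inv_mat q (1\<^sub>m q + S * D)"
  have M1: "1\<^sub>m q + D * S \<in> carrier_mat q q" using D S by auto
  have M2: "1\<^sub>m q + S * D \<in> carrier_mat q q" using D S by auto
  note i1 = inv_mat_props[OF inv2 M1, folded D1_def]
  note i2 = inv_mat_props[OF inv1 M2, folded D2_def]
  have D1c: "D1 \<in> carrier_mat q q" and D2c: "D2 \<in> carrier_mat q q" using i1 i2 by auto
  have dq: "dim_row D = q" using D by auto
  have dims[simp]: "dim_row S = q" "dim_col S = q" "dim_row D = q" "dim_col D = q" "dim_row D1 = q" "dim_col D1 = q"
    "dim_row D2 = q" "dim_col D2 = q" "dim_row A = n" "dim_col A = n" "dim_row B = n" "dim_col B = q"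
    "dim_row C = q" "dim_col C = n" "dim_row Bc = q" "dim_col Bc = m"
    using A B C D S D1c D2c Bc by auto
  have IC: "interconnect (A,B,C,D) S Bc = (A - B * D2 * S * C, B * D2 * Bc,
          transpose_mat Bc * D1 * C, transpose_mat Bc * D * D2 * Bc)"
    unfolding interconnect_def Let_def D1_def D2_def by (simp add: dq)
  have Btc: "transpose_mat Bc \<in> carrier_mat m q" using Bc by simp
  have wfc: "sys_wf (interconnect (A,B,C,D) S Bc) n m"
    unfolding IC sys_wf_def sys_A_def sys_B_def sys_C_def sys_D_def using A B C D S Bc D1c D2c Btc
    by (auto intro!: mult_carrier_mat minus_carrier_mat)
  have F1: "D2 *\<^sub>v y + S *\<^sub>v (D *\<^sub>v (D2 *\<^sub>v y)) = y" if y: "y \<in> carrier_vec q" for y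
  proof -
    have "(1\<^sub>m q + S * D) *\<^sub>v (D2 *\<^sub>v y) = ((1\<^sub>m q + S * D) * D2) *\<^sub>v y"
      using M2 D2c y by simp
    also have "\<dots> = y" using i2 y by simp
    finally show ?thesis using S D D2c y
      by (simp add: add_mult_distrib_mat_vec[of _ q q] assoc_mult_mat_vec[of S q q D q])
  qed
  have F2: "D1 *\<^sub>v w = w - D *\<^sub>v (D2 *\<^sub>v (S *\<^sub>v w))" if w: "w \<in> carrier_vec q" for w
  proof -
    let ?t = "w - D *\<^sub>v (D2 *\<^sub>v (S *\<^sub>v w))"
    have Sw: "S *\<^sub>v w \<in> carrier_vec q" using S w by simp
    have k: "D2 *\<^sub>v (S *\<^sub>v w) \<in> carrier_vec q" using D2c Sw by simp
    have k2: "D *\<^sub>v (D2 *\<^sub>v (S *\<^sub>v w)) \<in> carrier_vec q" using D k by simp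
    have k3: "S *\<^sub>v (D *\<^sub>v (D2 *\<^sub>v (S *\<^sub>v w))) \<in> carrier_vec q" using S k2 by simp
    have St: "S *\<^sub>v ?t = D2 *\<^sub>v (S *\<^sub>v w)"
    proof -
      have "S *\<^sub>v ?t = S *\<^sub>v w - S *\<^sub>v (D *\<^sub>v (D2 *\<^sub>v (S *\<^sub>v w)))"
        using S w k2 by (simp add: mult_minus_distrib_mat_vec[of S q q])
      also have "S *\<^sub>v (D *\<^sub>v (D2 *\<^sub>v (S *\<^sub>v w))) = S *\<^sub>v w - D2 *\<^sub>v (S *\<^sub>v w)"
        by (rule vL1[OF k Sw k3 F1[OF Sw]])
      finally show ?thesis using Sw k by (intro eq_vecI) auto
    qed
    have tc: "?t \<in> carrier_vec q" using w k2 by simp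
    have "(1\<^sub>m q + D * S) *\<^sub>v ?t = ?t + D *\<^sub>v (S *\<^sub>v ?t)"
      using D S tc by (simp add: add_mult_distrib_mat_vec[of _ q q] assoc_mult_mat_vec[of D q q S q])
    also have "\<dots> = w" unfolding St using w k2 by (intro eq_vecI) auto
    finally have "D1 *\<^sub>v ((1\<^sub>m q + D * S) *\<^sub>v ?t) = D1 *\<^sub>v w" by simp
    moreover have "D1 *\<^sub>v ((1\<^sub>m q + D * S) *\<^sub>v ?t) = ?t"
      using i1 M1 D1c tc by (simp add: assoc_mult_mat_vec[symmetric, of D1 q q _ q])
    ultimately show ?thesis by simp
  qed
  have "pr_lmi (interconnect (A,B,C,D) S Bc) n m X"
  proof (subst pr_lmi_iff[OF wfc X], intro ballI)
    fix x u :: "real vec" assume x: "x \<in> carrier_vec n" and u: "u \<in> carrier_vec m"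
    define w where "w = C *\<^sub>v x"
    define b where "b = Bc *\<^sub>v u"
    define v where "v = D2 *\<^sub>v (b - S *\<^sub>v w)"
    define z where "z = w + D *\<^sub>v v"
    have wc: "w \<in> carrier_vec q" unfolding w_def by (rule mult_mat_vec_carrier[OF C x])
    have bc: "b \<in> carrier_vec q" unfolding b_def by (rule mult_mat_vec_carrier[OF Bc u])
    have vc: "v \<in> carrier_vec q" unfolding v_def
      by (intro mult_mat_vec_carrier[OF D2c] minus_carrier_vec bc mult_mat_vec_carrier[OF S wc])
    have Dv: "D *\<^sub>v v \<in> carrier_vec q" by (rule mult_mat_vec_carrier[OF D vc])
    have zc: "z \<in> carrier_vec q" unfolding z_def by (rule add_carrier_vec[OF wc Dv])
    have Swc: "S *\<^sub>v w \<in> carrier_vec q" by (rule mult_mat_vec_carrier[OF S wc])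
    have v2: "v = D2 *\<^sub>v b - D2 *\<^sub>v (S *\<^sub>v w)" unfolding v_def
      by (rule mult_minus_distrib_mat_vec[OF D2c bc Swc])

    have Fv: "v + S *\<^sub>v (D *\<^sub>v v) = b - S *\<^sub>v w" unfolding v_def
      by (rule F1) (rule minus_carrier_vec[OF bc Swc])

    have bz: "b = v + S *\<^sub>v z"
    proof -
      have "S *\<^sub>v z = S *\<^sub>v w + S *\<^sub>v (D *\<^sub>v v)" unfolding z_def
        by (rule mult_add_distrib_mat_vec[OF S wc]) (use D vc in simp)
      thus ?thesis by (rule vL2[OF vc mult_mat_vec_carrier[OF S Dv] bc Swc Fv])
    qed
    have e1: "(A - B * D2 * S * C) *\<^sub>v x + B * D2 * Bc *\<^sub>v u = A *\<^sub>v x + B *\<^sub>v v"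
    proof -
      have "(A - B * D2 * S * C) *\<^sub>v x = A *\<^sub>v x - B *\<^sub>v (D2 *\<^sub>v (S *\<^sub>v w))"
      proof -
        have c1: "B * D2 \<in> carrier_mat n q" using B D2c by simp
        have c2: "B * D2 * S \<in> carrier_mat n q" using c1 S by simp
        have c3: "B * D2 * S * C \<in> carrier_mat n n" using c2 C by simp
        have "(B * D2 * S * C) *\<^sub>v x = (B * D2 * S) *\<^sub>v w"
          unfolding w_def by (rule assoc_mult_mat_vec[OF c2 C x])
        also have "\<dots> = (B * D2) *\<^sub>v (S *\<^sub>v w)" by (rule assoc_mult_mat_vec[OF c1 S wc])
        also have "\<dots> = B *\<^sub>v (D2 *\<^sub>v (S *\<^sub>v w))"
          by (rule assoc_mult_mat_vec[OF B D2c mult_mat_vec_carrier[OF S wc]])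
        finally show ?thesis using minus_mult_distrib_mat_vec[OF A c3 x] by simp
      qed
      moreover have "B * D2 * Bc *\<^sub>v u = B *\<^sub>v (D2 *\<^sub>v b)" unfolding b_def
        using assoc_mult_mat_vec[OF mult_carrier_mat[OF B D2c] Bc u] assoc_mult_mat_vec[OF B D2c bc[unfolded b_def]]
        by simp
      moreover have "B *\<^sub>v v = B *\<^sub>v (D2 *\<^sub>v b) - B *\<^sub>v (D2 *\<^sub>v (S *\<^sub>v w))"
        unfolding v2 using B D2c bc S wc by (simp add: mult_minus_distrib_mat_vec[of B n q])
      moreover have "A *\<^sub>v x \<in> carrier_vec n" by (rule mult_mat_vec_carrier[OF A x])
      moreover have "B *\<^sub>v (D2 *\<^sub>v b) \<in> carrier_vec n" using B D2c bc by simp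
      moreover have "B *\<^sub>v (D2 *\<^sub>v (S *\<^sub>v w)) \<in> carrier_vec n" using B D2c Swc by simp
      ultimately show ?thesis using vL3 by metis
    qed
    have e2: "transpose_mat Bc * D1 * C *\<^sub>v x + transpose_mat Bc * D * D2 * Bc *\<^sub>v u = transpose_mat Bc *\<^sub>v z"
    proof -
      have "transpose_mat Bc * D1 * C *\<^sub>v x = transpose_mat Bc *\<^sub>v (w - D *\<^sub>v (D2 *\<^sub>v (S *\<^sub>v w)))"
        unfolding w_def F2[OF wc, unfolded w_def, symmetric] by (rule assoc3_vec[OF Btc D1c C x])
      moreover have "transpose_mat Bc * D * D2 * Bc *\<^sub>v u = transpose_mat Bc *\<^sub>v (D *\<^sub>v (D2 *\<^sub>v b))"
        unfolding b_def by (rule assoc4_vec[OF Btc D D2c Bc u])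
      moreover have "z = (w - D *\<^sub>v (D2 *\<^sub>v (S *\<^sub>v w))) + D *\<^sub>v (D2 *\<^sub>v b)"
      proof -
        have d1: "D2 *\<^sub>v b \<in> carrier_vec q" using D2c bc by simp
        have d2: "D2 *\<^sub>v (S *\<^sub>v w) \<in> carrier_vec q" using D2c Swc by simp
        have "D *\<^sub>v v = D *\<^sub>v (D2 *\<^sub>v b) - D *\<^sub>v (D2 *\<^sub>v (S *\<^sub>v w))"
          unfolding v2 by (rule mult_minus_distrib_mat_vec[OF D d1 d2])
        thus ?thesis unfolding z_def
          using vL4[OF wc mult_mat_vec_carrier[OF D d2] mult_mat_vec_carrier[OF D d1]] by simp
      qed
      moreover have "w - D *\<^sub>v (D2 *\<^sub>v (S *\<^sub>v w)) \<in> carrier_vec q" using wc D D2c Swc by simp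
      moreover have "D *\<^sub>v (D2 *\<^sub>v b) \<in> carrier_vec q" using D D2c bc by simp
      ultimately show ?thesis using mult_add_distrib_mat_vec[OF Btc] by metis
    qed
    have Qb: "Qf (A,B,C,D) X x v \<le> 0" using pr_lmi_iff[OF wf X] lmi x vc by auto
    have Sz: "0 \<le> z \<bullet> (S *\<^sub>v z)" using Spsd zc unfolding psd_mat_def by auto
    have "u \<bullet> (transpose_mat Bc *\<^sub>v z) = b \<bullet> z" unfolding b_def by (rule tr_dot[OF Bc u zc])
    also have "\<dots> = v \<bullet> z + z \<bullet> (S *\<^sub>v z)" unfolding bz using vc S zc
      by (simp add: add_scalar_prod_distrib[of _ q] comm_scalar_prod[of "S *\<^sub>v z" q z])
    finally have uz: "u \<bullet> (transpose_mat Bc *\<^sub>v z) = v \<bullet> z + z \<bullet> (S *\<^sub>v z)" .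
    have "Qf (interconnect (A,B,C,D) S Bc) X x u = Qf (A,B,C,D) X x v - z \<bullet> (S *\<^sub>v z)"
    proof -
      have "Qf (interconnect (A,B,C,D) S Bc) X x u = x \<bullet> (X *\<^sub>v (A *\<^sub>v x + B *\<^sub>v v)) - u \<bullet> (transpose_mat Bc *\<^sub>v z)"
        unfolding Qf_def IC sys_A_def sys_B_def sys_C_def sys_D_def by (simp only: prod.case e1 e2)
      moreover have "Qf (A,B,C,D) X x v = x \<bullet> (X *\<^sub>v (A *\<^sub>v x + B *\<^sub>v v)) - v \<bullet> z"
        unfolding Qf_def sys_A_def sys_B_def sys_C_def sys_D_def z_def w_def by (simp only: prod.case)
      ultimately show ?thesis using uz by linarith
    qed
    thus "Qf (interconnect (A,B,C,D) S Bc) X x u \<le> 0" using Qb Sz by simp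
  qed
  thus ?thesis using wfc by simp
qed

lemma trunc_D: "sys_D (truncate_balanced r \<Sigma> T Tinv) = sys_D \<Sigma>"
  by (cases \<Sigma>) (simp add: truncate_balanced_def sys_D_def Let_def)

lemma trunc_iodim: "iodim (truncate_balanced r \<Sigma> T Tinv) = iodim \<Sigma>"
  by (cases \<Sigma>) (simp add: truncate_balanced_def iodim_def sys_B_def Let_def)

theorem theorem9:
  fixes \<Sigma>s :: "sys list" and S Bcal :: "real mat" and m :: nat
    and rs :: "nat list" and \<Sigma>hs :: "sys list" and \<Sigma>hc :: sys
  defines "q \<equiv> sum_list (map iodim \<Sigma>s)"
  defines "\<Sigma>c \<equiv> interconnect (parallel \<Sigma>s) S Bcal"
  assumes subsys: "\<forall>j < length \<Sigma>s. sys_wf (\<Sigma>s ! j) (sdim (\<Sigma>s ! j)) (iodim (\<Sigma>s ! j))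
                       \<and> is_passive (\<Sigma>s ! j) \<and> is_minimal (\<Sigma>s ! j)"
    and S_psd: "psd_mat q S"
    and Bcal_dim: "Bcal \<in> carrier_mat q m"
    and inv1: "invertible_mat (1\<^sub>m q + S * sys_D (parallel \<Sigma>s))"
    and inv2: "invertible_mat (1\<^sub>m q + sys_D (parallel \<Sigma>s) * S)"
    and c_passive: "is_passive \<Sigma>c"
    and c_minimal: "is_minimal \<Sigma>c"
    and c_stable: "asymp_stable \<Sigma>c"
    and orders: "length rs = length \<Sigma>s" "\<forall>j < length \<Sigma>s. rs ! j \<le> sdim (\<Sigma>s ! j)"
    and pibt: "PIBT \<Sigma>s S Bcal rs \<Sigma>hs \<Sigma>hc"
  shows "(\<forall>j < length \<Sigma>s. is_passive (\<Sigma>hs ! j)) \<and> is_passive \<Sigma>hc"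
proof -
  from pibt have len: "length \<Sigma>hs = length \<Sigma>s" and hc: "\<Sigma>hc = interconnect (parallel \<Sigma>hs) S Bcal"
    and ex: "\<exists>Pc. ctrb_gramian (interconnect (parallel \<Sigma>s) S Bcal) Pc \<and>
        (\<forall>j < length \<Sigma>s. \<exists>X T Tinv.
           available_storage (\<Sigma>s ! j) X \<and>
           balancing_transform (sdim (\<Sigma>s ! j))
             (diag_sub_block Pc (state_offset \<Sigma>s j) (sdim (\<Sigma>s ! j))) X T Tinv \<and>
           \<Sigma>hs ! j = truncate_balanced (rs ! j) (\<Sigma>s ! j) T Tinv)"
    unfolding PIBT_def by auto
  from ex obtain Pc where hj: "\<forall>j < length \<Sigma>s. \<exists>X T Tinv.
           available_storage (\<Sigma>s ! j) X \<and>
           balancing_transform (sdim (\<Sigma>s ! j))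
             (diag_sub_block Pc (state_offset \<Sigma>s j) (sdim (\<Sigma>s ! j))) X T Tinv \<and>
           \<Sigma>hs ! j = truncate_balanced (rs ! j) (\<Sigma>s ! j) T Tinv" by blast
  have part1: "is_passive (\<Sigma>hs ! j) \<and> iodim (\<Sigma>hs ! j) = iodim (\<Sigma>s ! j) \<and> sys_D (\<Sigma>hs ! j) = sys_D (\<Sigma>s ! j)"
    if j: "j < length \<Sigma>s" for j
  proof -
    obtain X T Tinv where av: "available_storage (\<Sigma>s ! j) X"
      and bt: "balancing_transform (sdim (\<Sigma>s ! j))
             (diag_sub_block Pc (state_offset \<Sigma>s j) (sdim (\<Sigma>s ! j))) X T Tinv"
      and eq: "\<Sigma>hs ! j = truncate_balanced (rs ! j) (\<Sigma>s ! j) T Tinv"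
      using hj j by blast
    have wf: "sys_wf (\<Sigma>s ! j) (sdim (\<Sigma>s ! j)) (iodim (\<Sigma>s ! j))" using subsys j by auto
    have Xpd: "pd_mat (sdim (\<Sigma>s ! j)) X" and lmi: "pr_lmi (\<Sigma>s ! j) (sdim (\<Sigma>s ! j)) (iodim (\<Sigma>s ! j)) X"
      using av unfolding available_storage_def by auto
    have r: "rs ! j \<le> sdim (\<Sigma>s ! j)" using orders j by auto
    from trunc_passive[OF wf Xpd lmi bt r]
    have "is_passive (\<Sigma>hs ! j)" unfolding eq is_passive_def by blast
    thus ?thesis unfolding eq trunc_D trunc_iodim by simp
  qed
  have all: "\<forall>\<Sigma>\<in>set \<Sigma>hs. is_passive \<Sigma>"
  proof
    fix \<Sigma> assume "\<Sigma> \<in> set \<Sigma>hs"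
    then obtain j where "j < length \<Sigma>hs" "\<Sigma> = \<Sigma>hs ! j" by (metis in_set_conv_nth)
    thus "is_passive \<Sigma>" using part1 len by auto
  qed
  have io: "map iodim \<Sigma>hs = map iodim \<Sigma>s" using part1 len by (intro nth_equalityI) auto
  have Dm: "map sys_D \<Sigma>hs = map sys_D \<Sigma>s" using part1 len by (intro nth_equalityI) auto
  obtain X where P: "sys_wf (parallel \<Sigma>hs) (sum_list (map sdim \<Sigma>hs)) q"
    "pd_mat (sum_list (map sdim \<Sigma>hs)) X" "pr_lmi (parallel \<Sigma>hs) (sum_list (map sdim \<Sigma>hs)) q X"
    using parallel_passive[OF all] unfolding io q_def by blast
  have PD: "sys_D (parallel \<Sigma>hs) = sys_D (parallel \<Sigma>s)"
    using Dm unfolding parallel_def by (simp add: sys_D_def[of "(_,_,_,_)"])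
  obtain A B C D where PE: "parallel \<Sigma>hs = (A,B,C,D)" by (cases "parallel \<Sigma>hs") auto
  have DD: "D = sys_D (parallel \<Sigma>s)" using PD PE by (simp add: sys_D_def)
  have "sys_wf (interconnect (A,B,C,D) S Bcal) (sum_list (map sdim \<Sigma>hs)) m \<and>
        pr_lmi (interconnect (A,B,C,D) S Bcal) (sum_list (map sdim \<Sigma>hs)) m X"
    by (rule interconnect_passive[OF P(1)[unfolded PE] P(2) P(3)[unfolded PE] S_psd Bcal_dim
          inv1[folded DD] inv2[folded DD]])
  hence "is_passive \<Sigma>hc" unfolding hc PE is_passive_def using P(2) by blast
  thus ?thesis using part1 by auto
qed

end
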